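(* Let $p$ be an odd prime. If $M$ is a discrete $A$-module, then $M$, with the $R$-action obtained by restriction along the inclusion $R\subset A$, is a Bousfield module.
   Context: $\mathbb{Z}_{(p)}$ denotes the $p$-local integers. $A$ is the ring of degree zero stable operations in $p$-local complex $K$-theory. Fix $q$ primitive mod $p^2$, $\Psi^q\in A$ the Adams operation, $q_i=q^{(-1)^i\lfloor i/2\rfloor}$, $\Theta_n(X)=\prod_{i=1}^n(X-q_i)$, $\Phi_n=\Theta_n(\Psi^q)$; every element of $A$ is uniquely a convergent sum $\sum_{n\ge0}a_n\Phi_n$ with $a_n\in\mathbb{Z}_{(p)}$, and $A_m=\{\sum_{n\ge m}a_n\Phi_n\}$. An $A$-module $M$ is discrete if each $x\in M$ satisfies $A_nx=0$ for some $n$. Let $R=\mathbb{Z}_{(p)}[\mathbb{Z}_{(p)}^\times]$, writing $\Psi^j$ for $j\in\mathbb{Z}_{(p)}^\times$; mapping $\Psi^j$ to the Adams operation $\Psi^j\in A$ gives $R\subset A$. A Bousfield module is an $R$-module $M$ such that for each $x\in M$: (a) $Rx$ is finitely generated over $\mathbb{Z}_{(p)}$; (b) for each $j\in\mathbb{Z}_{(p)}^\times$, $\Psi^j$ acts on $Rx\otimes\mathbb{Q}$ by a diagonalisable matrix whose eigenvalues are integer powers of $j$; (c) for each $m\ge1$ the action of $\mathbb{Z}_{(p)}^\times$ on $Rx/p^mRx$ factors through $\mathbb{Z}_{(p)}^\times\to(\mathbb{Z}/p^k\mathbb{Z})^\times$ for sufficiently large $k$. *)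

theory Defs
  imports "HOL-Number_Theory.Number_Theory"
begin

definition plocal :: "nat \<Rightarrow> rat \<Rightarrow> bool" where
  "plocal p r \<longleftrightarrow> \<not> (int p dvd snd (quotient_of r))"

definition plocal_unit :: "nat \<Rightarrow> rat \<Rightarrow> bool" where
  "plocal_unit p j \<longleftrightarrow> j \<noteq> 0 \<and> plocal p j \<and> plocal p (inverse j)"

definition primitive_mod_p2 :: "nat \<Rightarrow> int \<Rightarrow> bool" where
  "primitive_mod_p2 p q \<longleftrightarrow> residue_primroot (p^2) (nat (q mod int (p^2)))"

definition qexp :: "nat \<Rightarrow> int" where
  "qexp i = (-1) ^ i * int (i div 2)"

definition qnode :: "int \<Rightarrow> nat \<Rightarrow> rat" where
  "qnode q i = (of_int q) powi (qexp i)"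

definition Theta :: "int \<Rightarrow> nat \<Rightarrow> rat \<Rightarrow> rat" where
  "Theta q n X = (\<Prod>i=1..n. X - qnode q i)"

text \<open>Index i with e_i = k; Theta_n(q^k) = 0 for all n >= node_index k.\<close>
definition node_index :: "int \<Rightarrow> nat" where
  "node_index k = (if k > 0 then nat (2 * k) else nat (1 - 2 * k))"

text \<open>Model of A: an operation is recorded by its eigenvalue on the weight-k
  part for each k in Z, i.e. Psi^q |-> (k |-> q^k).  The element
  sum_{n>=m} a_n Phi_n (a_n in Z_(p)) is the function
  k |-> sum_n a_n Theta_n(q^k), a finite sum since Theta_n(q^k)=0 for
  n >= node_index k.  Ring operations are pointwise.\<close>
definition opA_from :: "nat \<Rightarrow> int \<Rightarrow> nat \<Rightarrow> (int \<Rightarrow> rat) set" where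
  "opA_from p q m = {f. \<exists>a :: nat \<Rightarrow> rat. (\<forall>n. plocal p (a n)) \<and> (\<forall>n<m. a n = 0) \<and>
       (\<forall>k. f k = (\<Sum>n<node_index k. a n * Theta q n ((of_int q) powi k)))}"

abbreviation opA :: "nat \<Rightarrow> int \<Rightarrow> (int \<Rightarrow> rat) set" where
  "opA p q \<equiv> opA_from p q 0"

definition scal :: "rat \<Rightarrow> int \<Rightarrow> rat" where
  "scal c = (\<lambda>k. c)"

definition adams :: "rat \<Rightarrow> int \<Rightarrow> rat" where
  "adams j = (\<lambda>k. j powi k)"

definition is_A_module :: "nat \<Rightarrow> int \<Rightarrow> ((int \<Rightarrow> rat) \<Rightarrow> 'm::ab_group_add \<Rightarrow> 'm) \<Rightarrow> bool" where
  "is_A_module p q act \<longleftrightarrow>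
     (\<forall>a\<in>opA p q. \<forall>x y. act a (x + y) = act a x + act a y) \<and>
     (\<forall>a\<in>opA p q. \<forall>b\<in>opA p q. \<forall>x. act (\<lambda>k. a k + b k) x = act a x + act b x) \<and>
     (\<forall>a\<in>opA p q. \<forall>b\<in>opA p q. \<forall>x. act (\<lambda>k. a k * b k) x = act a (act b x)) \<and>
     (\<forall>x. act (\<lambda>k. 1) x = x)"

definition discrete_A_module :: "nat \<Rightarrow> int \<Rightarrow> ((int \<Rightarrow> rat) \<Rightarrow> 'm::ab_group_add \<Rightarrow> 'm) \<Rightarrow> bool" where
  "discrete_A_module p q act \<longleftrightarrow> is_A_module p q act \<and>
     (\<forall>x. \<exists>n. \<forall>a\<in>opA_from p q n. act a x = 0)"

definition zp_span :: "nat \<Rightarrow> ((int \<Rightarrow> rat) \<Rightarrow> 'm::ab_group_add \<Rightarrow> 'm) \<Rightarrow> 'm set \<Rightarrow> 'm set" where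
  "zp_span p act G = {\<Sum>g\<in>G. act (scal (c g)) g | c. \<forall>g\<in>G. plocal p (c g)}"

text \<open>The cyclic R-submodule Rx, R = Z_(p)[Z_(p)^x] acting through Psi^j.\<close>
definition Rcyc :: "nat \<Rightarrow> ((int \<Rightarrow> rat) \<Rightarrow> 'm::ab_group_add \<Rightarrow> 'm) \<Rightarrow> 'm \<Rightarrow> 'm set" where
  "Rcyc p act x = {\<Sum>j\<in>J. act (scal (c j)) (act (adams j) x) | J c.
       finite J \<and> (\<forall>j\<in>J. plocal_unit p j) \<and> (\<forall>j\<in>J. plocal p (c j))}"

definition bousfield_module :: "nat \<Rightarrow> ((int \<Rightarrow> rat) \<Rightarrow> 'm::ab_group_add \<Rightarrow> 'm) \<Rightarrow> bool" where
  "bousfield_module p act \<longleftrightarrow> (\<forall>x.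
     \<comment> \<open>(a) Rx finitely generated over Z_(p)\<close>
     (\<exists>G. finite G \<and> G \<subseteq> Rcyc p act x \<and> Rcyc p act x = zp_span p act G) \<and>
     \<comment> \<open>(b) Rx tensor Q is spanned by eigenvectors of Psi^j with eigenvalues j^k, k in Z\<close>
     (\<forall>j. plocal_unit p j \<longrightarrow> (\<forall>y\<in>Rcyc p act x.
        \<exists>c zs. c \<noteq> 0 \<and> plocal p c \<and> act (scal c) y = sum_list (map fst zs) \<and>
          (\<forall>(z, k)\<in>set zs. z \<in> Rcyc p act x \<and>
             (\<exists>d. d \<noteq> 0 \<and> plocal p d \<and>
                act (scal d) (act (adams j) z - act (scal (j powi k)) z) = 0)))) \<and>
     \<comment> \<open>(c) action on Rx/p^m Rx factors through (Z/p^k)^x for large k\<close>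
     (\<forall>m::nat. m \<ge> 1 \<longrightarrow> (\<exists>k0. \<forall>k\<ge>k0. \<forall>j j'. plocal_unit p j \<longrightarrow> plocal_unit p j' \<longrightarrow>
        plocal p ((j - j') / of_nat (p ^ k)) \<longrightarrow>
        (\<forall>y\<in>Rcyc p act x. \<exists>z\<in>Rcyc p act x.
           act (adams j) y - act (adams j') y = act (scal (of_nat (p ^ m))) z))))"

end

theory Submission
  imports Defs
begin


lemma plocal_iff:
  assumes "prime p"
  shows "plocal p r \<longleftrightarrow> (\<exists>a b. \<not> int p dvd b \<and> r = of_int a / of_int b)"
proof
  assume "plocal p r"
  obtain a b where ab: "quotient_of r = (a, b)" by (cases "quotient_of r")
  then have "r = of_int a / of_int b" by (simp add: quotient_of_div)
  with \<open>plocal p r\<close> ab show "\<exists>a b. \<not> int p dvd b \<and> r = of_int a / of_int b"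
    unfolding plocal_def by auto
next
  assume "\<exists>a b. \<not> int p dvd b \<and> r = of_int a / of_int b"
  then obtain a b where nb: "\<not> int p dvd b" and r: "r = of_int a / of_int b" by blast
  have b0: "b \<noteq> 0" using nb by auto
  obtain a' b' where ab: "quotient_of r = (a', b')" by (cases "quotient_of r")
  have b'0: "b' > 0" using ab quotient_of_denom_pos by blast
  have cop: "coprime a' b'" using ab quotient_of_coprime by blast
  have "of_int a / of_int b = (of_int a' / of_int b' :: rat)" using r ab quotient_of_div by metis
  then have "a * b' = a' * b" using b0 b'0 by (simp add: frac_eq_eq) (metis of_int_eq_iff of_int_mult)
  then have "b' dvd a' * b" by (metis dvd_triv_right)
  then have "b' dvd b" using cop by (meson coprime_commute coprime_dvd_mult_right_iff)
  then have "\<not> int p dvd b'" using nb dvd_trans by blast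
  then show "plocal p r" unfolding plocal_def using ab by simp
qed

context
  fixes p :: nat
  assumes pp: "prime p"
begin

lemma pl_intro: "\<not> int p dvd b \<Longrightarrow> plocal p (of_int a / of_int b)"
  using plocal_iff[OF pp] by blast

lemma pl_elim: "plocal p r \<Longrightarrow> (\<And>a b. \<not> int p dvd b \<Longrightarrow> b \<noteq> 0 \<Longrightarrow> r = of_int a / of_int b \<Longrightarrow> P) \<Longrightarrow> P"
  using plocal_iff[OF pp] by (metis dvd_0_right)

lemma pprime_int: "prime (int p)" using pp by simp

lemma pl_of_int[simp]: "plocal p (of_int a)"
proof -
  have "\<not> int p dvd 1" using pprime_int not_prime_unit by blast
  then show ?thesis using pl_intro[of 1 a] by simp
qed

lemma pl_0[simp]: "plocal p 0" using pl_of_int[of 0] by simp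
lemma pl_1[simp]: "plocal p 1" using pl_of_int[of 1] by simp
lemma pl_of_nat[simp]: "plocal p (of_nat n)" using pl_of_int[of "int n"] by simp
lemma pl_numeral[simp]: "plocal p (numeral n)" using pl_of_nat[of "numeral n"] by simp

lemma pl_add[intro]: assumes "plocal p x" "plocal p y" shows "plocal p (x + y)"
proof -
  obtain a b where ab: "\<not> int p dvd b" "b \<noteq> 0" "x = of_int a / of_int b" using assms(1) pl_elim by blast
  obtain c d where cd: "\<not> int p dvd d" "d \<noteq> 0" "y = of_int c / of_int d" using assms(2) pl_elim by blast
  have "x + y = of_int (a * d + c * b) / of_int (b * d)" using ab cd by (simp add: field_simps)
  moreover have "\<not> int p dvd b * d" using ab cd pprime_int by (simp add: prime_dvd_mult_iff)
  ultimately show ?thesis by (metis pl_intro)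
qed

lemma pl_mult[intro]: assumes "plocal p x" "plocal p y" shows "plocal p (x * y)"
proof -
  obtain a b where ab: "\<not> int p dvd b" "b \<noteq> 0" "x = of_int a / of_int b" using assms(1) pl_elim by blast
  obtain c d where cd: "\<not> int p dvd d" "d \<noteq> 0" "y = of_int c / of_int d" using assms(2) pl_elim by blast
  have "x * y = of_int (a * c) / of_int (b * d)" using ab cd by (simp add: field_simps)
  moreover have "\<not> int p dvd b * d" using ab cd pprime_int by (simp add: prime_dvd_mult_iff)
  ultimately show ?thesis by (metis pl_intro)
qed

lemma pl_uminus[intro]: assumes "plocal p x" shows "plocal p (- x)"
  using pl_mult[OF pl_of_int[of "-1"] assms] by simp

lemma pl_diff[intro]: assumes "plocal p x" "plocal p y" shows "plocal p (x - y)"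
  using pl_add[OF assms(1) pl_uminus[OF assms(2)]] by simp

lemma pl_sum[intro]: "(\<And>i. i \<in> A \<Longrightarrow> plocal p (f i)) \<Longrightarrow> plocal p (sum f A)"
  by (induction A rule: infinite_finite_induct) auto

lemma pl_prod[intro]: "(\<And>i. i \<in> A \<Longrightarrow> plocal p (f i)) \<Longrightarrow> plocal p (prod f A)"
  by (induction A rule: infinite_finite_induct) auto

lemma pl_power[intro]: "plocal p x \<Longrightarrow> plocal p (x ^ n)"
  by (induction n) auto

lemma plu_powi[intro]: assumes "plocal_unit p j" shows "plocal p (j powi k)"
  using assms unfolding plocal_unit_def power_int_def by auto

lemma plu_mult: assumes "plocal_unit p x" "plocal_unit p y" shows "plocal_unit p (x * y)"
  using assms unfolding plocal_unit_def by (auto simp: inverse_mult_distrib)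

lemma plu_inverse: assumes "plocal_unit p x" shows "plocal_unit p (inverse x)"
  using assms unfolding plocal_unit_def by auto

lemma plu_powi_unit: assumes "plocal_unit p x" shows "plocal_unit p (x powi k)"
  using assms unfolding plocal_unit_def
  by (auto simp: power_int_inverse[symmetric] intro!: plu_powi[unfolded plocal_unit_def])

lemma plu_int: assumes "\<not> int p dvd a" shows "plocal_unit p (of_int a)"
proof -
  have "a \<noteq> 0" using assms by auto
  moreover have "plocal p (inverse (of_int a))" using pl_intro[OF assms, of 1] by (simp add: divide_inverse)
  ultimately show ?thesis unfolding plocal_unit_def by simp
qed

lemma pl_div_unit: "plocal p x \<Longrightarrow> plocal_unit p y \<Longrightarrow> plocal p (x / y)"
  unfolding plocal_unit_def divide_inverse by auto

lemma pl_ppow_div: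
  assumes "C \<noteq> 0" "N \<ge> multiplicity (int p) C"
  shows "plocal p (of_nat p ^ N / of_int C)"
proof -
  define m where "m = multiplicity (int p) C"
  have nu: "\<not> is_unit (int p)" using pprime_int not_prime_unit by blast
  obtain c where c: "C = int p ^ m * c" "\<not> int p dvd c"
    using multiplicity_decompose'[OF assms(1) nu] unfolding m_def by blast
  have "of_nat p ^ N / of_int C = (of_int (int p ^ (N - m)) / of_int c :: rat)"
  proof -
    have "(of_nat p ^ N :: rat) = of_nat p ^ (N - m) * of_nat p ^ m"
      using assms(2) unfolding m_def by (simp add: power_add[symmetric])
    moreover have "c \<noteq> 0" using c assms by auto
    moreover have "(of_nat p :: rat) \<noteq> 0" using pp by (simp add: prime_gt_0_nat)
    ultimately show ?thesis using c(1) by (simp add: field_simps)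
  qed
  then show ?thesis using pl_intro[OF c(2), of "int p ^ (N - m)"] by (metis of_int_of_nat_eq of_int_power)
qed

end


lemma qexp_node_index[simp]: "qexp (node_index k) = k"
proof (cases "k > 0")
  case True
  then have "node_index k = 2 * nat k" by (simp add: node_index_def nat_mult_distrib)
  then show ?thesis using True by (simp add: qexp_def)
next
  case False
  then have "node_index k = Suc (2 * nat (-k))" by (simp add: node_index_def nat_mult_distrib)
  then show ?thesis using False by (simp add: qexp_def)
qed

lemma node_index_qexp[simp]: "i \<ge> 1 \<Longrightarrow> node_index (qexp i) = i"
proof (cases "even i")
  case True
  assume "i \<ge> 1"
  then obtain t where t: "i = 2 * t" using True by (metis evenE)
  moreover have "t \<ge> 1" using \<open>i \<ge> 1\<close> t by simp
  ultimately show ?thesis by (simp add: qexp_def node_index_def)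
next
  case False
  then obtain t where t: "i = 2 * t + 1" by (metis oddE)
  then show ?thesis by (simp add: qexp_def node_index_def)
qed

lemma node_index_pos: "node_index k \<ge> 1"
  unfolding node_index_def by (simp add: Suc_le_eq)

lemma qexp_inj: "i \<ge> 1 \<Longrightarrow> l \<ge> 1 \<Longrightarrow> qexp i = qexp l \<Longrightarrow> i = l"
  by (metis node_index_qexp)

lemma powi_inj_rat:
  fixes Q :: rat
  assumes "\<bar>Q\<bar> > 1" "Q powi a = Q powi b"
  shows "a = b"
proof (rule ccontr)
  assume ne: "a \<noteq> b"
  have Q0: "Q \<noteq> 0" using assms by auto
  have key: "\<And>a b. a < b \<Longrightarrow> Q powi a = Q powi b \<Longrightarrow> False"
  proof -
    fix a b :: int assume ab: "a < b" "Q powi a = Q powi b"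
    have "Q powi b = Q powi a * Q powi (b - a)" using Q0 by (simp add: power_int_add[symmetric])
    then have "Q powi (b - a) = 1" using ab Q0 by simp
    then have "Q ^ nat (b - a) = 1" using ab by (simp add: power_int_def)
    then have "\<bar>Q\<bar> ^ nat (b - a) = 1" by (metis abs_one power_abs)
    moreover have "\<bar>Q\<bar> ^ nat (b - a) > 1" using ab assms(1) by (intro one_less_power) auto
    ultimately show False by simp
  qed
  show False using ne assms(2) key[of a b] key[of b a] by (cases "a < b") auto
qed

locale qsetup =
  fixes p :: nat and q :: int
  assumes pp: "prime p" and qcop: "\<not> int p dvd q" and qbig: "\<bar>q\<bar> > 1"
begin

abbreviation "Q \<equiv> (of_int q :: rat)"
abbreviation "xn i \<equiv> qnode q i"

lemmas [simp] = pl_0[OF pp] pl_1[OF pp] pl_of_int[OF pp] pl_of_nat[OF pp] pl_numeral[OF pp]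

lemma Qbig: "\<bar>Q\<bar> > 1" using qbig by linarith
lemma Q0: "Q \<noteq> 0" using qbig by auto

lemma Q_unit: "plocal_unit p Q" using plu_int[OF pp qcop] .

lemma pl_Qpowi[intro]: "plocal p (Q powi k)" using plu_powi[OF pp Q_unit] .

lemma pl_xn[intro]: "plocal p (xn i)" unfolding qnode_def using pl_Qpowi .

lemma xn_qexp: "Q powi (qexp i) = xn i" by (simp add: qnode_def)

lemma xn_inj: "i \<ge> 1 \<Longrightarrow> l \<ge> 1 \<Longrightarrow> xn i = xn l \<Longrightarrow> i = l"
  unfolding qnode_def using powi_inj_rat[OF Qbig] qexp_inj by blast

lemma pl_Theta[intro]: "plocal p X \<Longrightarrow> plocal p (Theta q r X)"
  unfolding Theta_def by (intro pl_prod[OF pp] pl_diff[OF pp] pl_xn)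

lemma Theta_vanish: "r \<ge> node_index k \<Longrightarrow> Theta q r (Q powi k) = 0"
proof -
  assume r: "r \<ge> node_index k"
  have "node_index k \<in> {1..r}" using r node_index_pos by auto
  moreover have "Q powi k - xn (node_index k) = 0" by (simp add: qnode_def)
  ultimately show ?thesis unfolding Theta_def by (meson finite_atLeastAtMost prod_zero)
qed

lemma Theta_vanish': "l \<ge> 1 \<Longrightarrow> r \<ge> l \<Longrightarrow> Theta q r (xn l) = 0"
  using Theta_vanish[of "qexp l" r] by (simp add: xn_qexp)

lemma Theta_nz: "r < l \<Longrightarrow> Theta q r (xn l) \<noteq> 0"
proof -
  assume rl: "r < l"
  have "\<And>i. i \<in> {1..r} \<Longrightarrow> xn l - xn i \<noteq> 0"
  proof
    fix i assume i: "i \<in> {1..r}" "xn l - xn i = 0"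
    then have "l = i" using xn_inj[of l i] rl by auto
    then show False using i rl by auto
  qed
  then show ?thesis unfolding Theta_def by (subst prod_zero_iff) auto
qed

lemma Theta_Suc: "Theta q (Suc r) X = Theta q r X * (X - xn (Suc r))"
  unfolding Theta_def by simp

lemma Theta_0[simp]: "Theta q 0 X = 1"
  unfolding Theta_def by simp

end

function ncoef :: "int \<Rightarrow> (int \<Rightarrow> rat) \<Rightarrow> nat \<Rightarrow> rat" where
  "ncoef q f m = (f (qexp (Suc m)) - (\<Sum>r<m. ncoef q f r * Theta q r (qnode q (Suc m))))
                  / Theta q m (qnode q (Suc m))"
  by auto
termination by (relation "measure (\<lambda>(q, f, m). m)") auto

declare ncoef.simps[simp del]

context qsetup
begin

lemma ncoef_repr: "f k = (\<Sum>n<node_index k. ncoef q f n * Theta q n (Q powi k))"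
proof -
  obtain m where m: "node_index k = Suc m" using node_index_pos by (metis Suc_le_D One_nat_def)
  have k: "k = qexp (Suc m)" using m qexp_node_index by metis
  have X: "Q powi k = xn (Suc m)" using k xn_qexp by simp
  have th: "Theta q m (xn (Suc m)) \<noteq> 0" using Theta_nz by simp
  have "(\<Sum>n<node_index k. ncoef q f n * Theta q n (Q powi k))
      = (\<Sum>n<m. ncoef q f n * Theta q n (xn (Suc m))) + ncoef q f m * Theta q m (xn (Suc m))"
    using m X by simp
  also have "ncoef q f m * Theta q m (xn (Suc m)) = f k - (\<Sum>n<m. ncoef q f n * Theta q n (xn (Suc m)))"
    using th k by (subst ncoef.simps) simp
  finally show ?thesis by simp
qed

lemma ncoef_unique:
  assumes rep: "\<And>k. f k = (\<Sum>n<node_index k. a n * Theta q n (Q powi k))"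
  shows "ncoef q f m = a m"
proof (induction m rule: less_induct)
  case (less m)
  have th: "Theta q m (xn (Suc m)) \<noteq> 0" using Theta_nz by simp
  have "f (qexp (Suc m)) = (\<Sum>n<Suc m. a n * Theta q n (xn (Suc m)))"
    using rep[of "qexp (Suc m)"] by (simp add: xn_qexp)
  also have "\<dots> = (\<Sum>n<m. ncoef q f n * Theta q n (xn (Suc m))) + a m * Theta q m (xn (Suc m))"
    using less by simp
  finally show ?case using th by (subst ncoef.simps) simp
qed

lemma opA_iff: "f \<in> opA_from p q M \<longleftrightarrow> (\<forall>n. plocal p (ncoef q f n)) \<and> (\<forall>n<M. ncoef q f n = 0)"
proof
  assume "f \<in> opA_from p q M"
  then obtain a where a: "\<forall>n. plocal p (a n)" "\<forall>n<M. a n = 0"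
     "\<forall>k. f k = (\<Sum>n<node_index k. a n * Theta q n (Q powi k))"
    unfolding opA_from_def by blast
  have "ncoef q f n = a n" for n using ncoef_unique a(3) by blast
  then show "(\<forall>n. plocal p (ncoef q f n)) \<and> (\<forall>n<M. ncoef q f n = 0)" using a by simp
next
  assume "(\<forall>n. plocal p (ncoef q f n)) \<and> (\<forall>n<M. ncoef q f n = 0)"
  then show "f \<in> opA_from p q M" unfolding opA_from_def using ncoef_repr by blast
qed

lemma ncoef_lin: "ncoef q (\<lambda>k. c * f k + d * g k) m = c * ncoef q f m + d * ncoef q g m"
proof (rule ncoef_unique)
  fix k
  show "c * f k + d * g k = (\<Sum>n<node_index k. (c * ncoef q f n + d * ncoef q g n) * Theta q n (Q powi k))"
    by (subst (1 2) ncoef_repr) (simp add: sum_distrib_left sum.distrib algebra_simps)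
qed

lemma ncoef_zero:
  assumes "\<And>i. i \<in> {1..n} \<Longrightarrow> f (qexp i) = 0" "m < n"
  shows "ncoef q f m = 0"
  using assms(2)
proof (induction m rule: less_induct)
  case (less m)
  then show ?case using assms(1)[of "Suc m"] by (subst ncoef.simps) simp
qed

lemma Den: "\<exists>C::int. C \<noteq> 0 \<and> (\<forall>u. (\<forall>i\<in>{1..n}. plocal p (u (qexp i))) \<longrightarrow>
              (\<forall>r<n. plocal p (of_int C * ncoef q u r)))"
proof (induction n)
  case 0
  then show ?case by (intro exI[of _ 1]) simp
next
  case (Suc n)
  then obtain C :: int where C: "C \<noteq> 0" "\<And>u. (\<forall>i\<in>{1..n}. plocal p (u (qexp i))) \<Longrightarrow>
              (\<forall>r<n. plocal p (of_int C * ncoef q u r))" by blast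
  define th where "th = Theta q n (xn (Suc n))"
  have th0: "th \<noteq> 0" unfolding th_def using Theta_nz by simp
  have thl: "plocal p th" unfolding th_def by (intro pl_Theta pl_xn)
  obtain a b where ab: "\<not> int p dvd b" "b \<noteq> 0" "th = of_int a / of_int b" using pl_elim[OF pp thl] by blast
  have a0: "a \<noteq> 0" using ab th0 by auto
  show ?case
  proof (intro exI[of _ "C * a"] conjI allI impI)
    show "C * a \<noteq> 0" using C a0 by simp
    fix u r assume u: "\<forall>i\<in>{1..Suc n}. plocal p (u (qexp i))" and r: "r < Suc n"
    have u': "\<forall>i\<in>{1..n}. plocal p (u (qexp i))" using u by auto
    have IH: "\<And>r. r < n \<Longrightarrow> plocal p (of_int C * ncoef q u r)" using C(2)[OF u'] by blast
    show "plocal p (of_int (C * a) * ncoef q u r)"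
    proof (cases "r < n")
      case True
      then have "of_int (C * a) * ncoef q u r = of_int a * (of_int C * ncoef q u r)" by simp
      then show ?thesis using IH[OF True] pl_mult[OF pp] pl_of_int[OF pp] by metis
    next
      case False
      then have rn: "r = n" using r by simp
      define S where "S = (\<Sum>r<n. ncoef q u r * Theta q r (xn (Suc n)))"
      have e1: "ncoef q u n = (u (qexp (Suc n)) - S) / th"
        unfolding S_def th_def by (subst ncoef.simps) simp
      have e2: "of_int (C * a) * ((u (qexp (Suc n)) - S) / th) = of_int b * (of_int C * (u (qexp (Suc n)) - S))"
        using ab(2) a0 by (subst ab(3)) (simp add: field_simps)
      have e3: "of_int C * (u (qexp (Suc n)) - S) = of_int C * u (qexp (Suc n)) -
             (\<Sum>r<n. (of_int C * ncoef q u r) * Theta q r (xn (Suc n)))"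
        unfolding S_def by (simp add: sum_distrib_left right_diff_distrib mult.assoc)
      have "plocal p (u (qexp (Suc n)))" using u by simp
      moreover have "plocal p (\<Sum>r<n. (of_int C * ncoef q u r) * Theta q r (xn (Suc n)))"
        by (rule pl_sum[OF pp], rule pl_mult[OF pp]) (use IH in auto)
      ultimately have "plocal p (of_int b * (of_int C * (u (qexp (Suc n)) - S)))"
        unfolding e3 by (intro pl_mult[OF pp] pl_diff[OF pp] pl_of_int[OF pp])
      then show ?thesis using rn e1 e2 by simp
    qed
  qed
qed

lemma interp: "\<exists>C::int. C \<noteq> 0 \<and> (\<forall>v. (\<forall>i\<in>{1..n}. plocal p (v (qexp i))) \<longrightarrow>
       (\<exists>h\<in>opA p q. \<forall>i\<in>{1..n}. h (qexp i) = of_int C * v (qexp i)))"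
proof -
  obtain C :: int where C: "C \<noteq> 0" "\<And>u. (\<forall>i\<in>{1..n}. plocal p (u (qexp i))) \<Longrightarrow>
              (\<forall>r<n. plocal p (of_int C * ncoef q u r))" using Den by blast
  show ?thesis
  proof (intro exI[of _ C] conjI allI impI)
    show "C \<noteq> 0" by fact
    fix v assume v: "\<forall>i\<in>{1..n}. plocal p (v (qexp i))"
    define a where "a r = (if r < n then of_int C * ncoef q v r else 0)" for r
    define h where "h k = (\<Sum>r<node_index k. a r * Theta q r (Q powi k))" for k
    have al: "plocal p (a r)" for r using C(2)[OF v] by (cases "r < n") (simp_all add: a_def)
    have "h \<in> opA p q" unfolding opA_from_def h_def using al by blast
    moreover have "h (qexp i) = of_int C * v (qexp i)" if i: "i \<in> {1..n}" for i
    proof -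
      have "h (qexp i) = (\<Sum>r<i. of_int C * ncoef q v r * Theta q r (xn i))"
        unfolding h_def using i by (intro sum.cong) (auto simp: a_def xn_qexp)
      also have "\<dots> = of_int C * v (qexp i)"
        by (subst (2) ncoef_repr) (use i in \<open>simp add: xn_qexp sum_distrib_left mult.assoc\<close>)
      finally show ?thesis .
    qed
    ultimately show "\<exists>h\<in>opA p q. \<forall>i\<in>{1..n}. h (qexp i) = of_int C * v (qexp i)" by blast
  qed
qed

end


context qsetup
begin

lemma ncoef_add: "ncoef q (\<lambda>k. f k + g k) m = ncoef q f m + ncoef q g m"
  using ncoef_lin[of 1 f 1 g m] by simp

lemma ncoef_smult: "ncoef q (\<lambda>k. c * f k) m = c * ncoef q f m"
  using ncoef_lin[of c f 0 f m] by simp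

lemma opA_add[intro]: "f \<in> opA_from p q M \<Longrightarrow> g \<in> opA_from p q M \<Longrightarrow> (\<lambda>k. f k + g k) \<in> opA_from p q M"
  unfolding opA_iff ncoef_add using pl_add[OF pp] by auto

lemma opA_smult[intro]: "plocal p c \<Longrightarrow> f \<in> opA_from p q M \<Longrightarrow> (\<lambda>k. c * f k) \<in> opA_from p q M"
  unfolding opA_iff ncoef_smult using pl_mult[OF pp] by auto

lemma opA_diff[intro]: "f \<in> opA_from p q M \<Longrightarrow> g \<in> opA_from p q M \<Longrightarrow> (\<lambda>k. f k - g k) \<in> opA_from p q M"
  using opA_add[of f M "\<lambda>k. (-1) * g k"] opA_smult[of "-1" g M] pl_uminus[OF pp pl_1[OF pp]] by simp

lemma opA_zero[intro]: "(\<lambda>k. 0) \<in> opA_from p q M"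
proof -
  have 1: "ncoef q (\<lambda>k. 0) m = 0" for m using ncoef_lin[of 0 "\<lambda>k. 0" 0 "\<lambda>k. 0" m] by simp
  have 2: "(\<lambda>k. 0) \<in> opA_from p q M \<longleftrightarrow> (\<forall>n. plocal p (ncoef q (\<lambda>k. 0) n)) \<and> (\<forall>n<M. ncoef q (\<lambda>k. 0) n = 0)"
    by (rule opA_iff)
  show ?thesis unfolding 2 1 by simp
qed

lemma opA_sum: "finite T \<Longrightarrow> (\<And>t. t \<in> T \<Longrightarrow> F t \<in> opA_from p q M) \<Longrightarrow> (\<lambda>k. \<Sum>t\<in>T. F t k) \<in> opA_from p q M"
proof (induction T rule: finite_induct)
  case empty
  then show ?case using opA_zero by simp
next
  case (insert x F)
  then show ?case by (simp add: opA_add)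
qed

lemma opA_vals: "f \<in> opA_from p q M \<Longrightarrow> plocal p (f k)"
  unfolding opA_iff by (subst ncoef_repr) (auto intro!: pl_sum[OF pp] pl_mult[OF pp] pl_Theta)

lemma opA_mono: "f \<in> opA_from p q M \<Longrightarrow> f \<in> opA p q"
  unfolding opA_iff by simp

lemma opA_vanish:
  assumes "f \<in> opA p q" "\<And>i. i \<in> {1..n} \<Longrightarrow> f (qexp i) = 0"
  shows "f \<in> opA_from p q n"
proof -
  have "ncoef q f m = 0" if "m < n" for m using ncoef_zero[of n f m] assms(2) that by blast
  then show ?thesis using assms(1) unfolding opA_iff by auto
qed

lemma opA_one: "(\<lambda>k. 1) \<in> opA p q"
  unfolding opA_from_def
proof (intro CollectI exI[of _ "\<lambda>n. if n = 0 then 1 else 0"] conjI allI)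
  fix k
  obtain m where m: "node_index k = Suc m" using node_index_pos by (metis Suc_le_D One_nat_def)
  have "(\<Sum>n<node_index k. (if n = 0 then 1 else 0) * Theta q n (Q powi k)) = (1::rat)"
    unfolding m by (subst sum.lessThan_Suc_shift) simp
  then show "1 = (\<Sum>n<node_index k. (if n = 0 then 1 else 0) * Theta q n (Q powi k))" by simp
qed auto

lemma opA_mulQ:
  assumes f: "f \<in> opA p q"
  shows "(\<lambda>k. Q powi k * f k) \<in> opA p q"
proof -
  define a where "a = ncoef q f"
  have al: "plocal p (a n)" for n using f unfolding opA_iff a_def by simp
  define b where "b m = (if m = 0 then 0 else a (m - 1)) + a m * xn (Suc m)" for m
  have bl: "plocal p (b m)" for m unfolding b_def using al
    by (intro pl_add[OF pp] pl_mult[OF pp]) auto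
  have rep: "Q powi k * f k = (\<Sum>m<node_index k. b m * Theta q m (Q powi k))" for k
  proof -
    obtain i where i: "node_index k = Suc i" using node_index_pos by (metis Suc_le_D One_nat_def)
    define X where "X = Q powi k"
    have XT: "X * Theta q n X = Theta q (Suc n) X + xn (Suc n) * Theta q n X" for n
      by (simp add: Theta_Suc algebra_simps)
    have v: "Theta q (Suc i) X = 0" unfolding X_def using Theta_vanish i by simp
    have "Q powi k * f k = (\<Sum>n<Suc i. a n * (X * Theta q n X))"
      by (subst ncoef_repr) (simp add: i X_def a_def sum_distrib_left algebra_simps)
    also have "\<dots> = (\<Sum>n<Suc i. a n * Theta q (Suc n) X) + (\<Sum>n<Suc i. a n * xn (Suc n) * Theta q n X)"
      unfolding XT by (simp add: sum.distrib algebra_simps)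
    also have "(\<Sum>n<Suc i. a n * Theta q (Suc n) X) = (\<Sum>n<i. a n * Theta q (Suc n) X)"
      using v by simp
    also have "\<dots> = (\<Sum>m<Suc i. (if m = 0 then 0 else a (m - 1)) * Theta q m X)"
      by (subst sum.lessThan_Suc_shift) simp
    finally show ?thesis unfolding b_def X_def i by (simp add: sum.distrib algebra_simps)
  qed
  show ?thesis unfolding opA_from_def using bl rep by blast
qed

lemma adams_Qpow: "adams (Q ^ s) \<in> opA p q"
proof (induction s)
  case 0
  then show ?case using opA_one by (simp add: adams_def)
next
  case (Suc s)
  have "adams (Q ^ Suc s) = (\<lambda>k. Q powi k * adams (Q ^ s) k)"
    unfolding adams_def by (auto simp: power_int_mult_distrib)
  then show ?case using opA_mulQ[OF Suc] by simp
qed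

end


lemma pow_p_cong_int:
  fixes x :: int
  assumes "prime p" "[x = 1] (mod int p)"
  shows "[x ^ p = 1] (mod int p ^ 2)"
proof -
  have e: "x ^ p - 1 = (x - 1) * (\<Sum>i<p. x ^ i)" by (rule power_diff_1_eq)
  have "[(\<Sum>i<p. x ^ i) = (\<Sum>i<p. 1)] (mod int p)"
    by (rule cong_sum) (metis assms(2) cong_pow power_one)
  then have "[(\<Sum>i<p. x ^ i) = int p] (mod int p)" by simp
  then have d1: "int p dvd (\<Sum>i<p. x ^ i)" using cong_dvd_iff by fastforce
  have d2: "int p dvd x - 1" using assms(2) cong_iff_dvd_diff by blast
  have "int p * int p dvd (x - 1) * (\<Sum>i<p. x ^ i)" using d2 d1 by (rule mult_dvd_mono)
  then show ?thesis unfolding cong_iff_dvd_diff e by (simp add: power2_eq_square)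
qed

lemma prim_p2_imp_p:
  assumes p: "prime p" and g: "residue_primroot (p ^ 2) g"
  shows "residue_primroot p g"
proof -
  have p1: "p > 1" using p prime_gt_1_nat by blast
  have cop2: "coprime (p ^ 2) g" and ord2: "ord (p ^ 2) g = totient (p ^ 2)"
    using g by (auto simp: residue_primroot_def)
  have cop: "coprime p g" using cop2 by simp
  define d where "d = ord p g"
  have d0: "d > 0" unfolding d_def using cop by simp
  have "[g ^ d = 1] (mod p)" unfolding d_def using ord_works by blast
  then have "[int g ^ d = 1] (mod int p)" by (metis cong_int_iff of_nat_1 of_nat_power)
  then have "[(int g ^ d) ^ p = 1] (mod int p ^ 2)" using pow_p_cong_int[OF p] by blast
  then have "[g ^ (d * p) = 1] (mod p ^ 2)"
    by (metis cong_int_iff of_nat_1 of_nat_power power_mult)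
  then have "ord (p ^ 2) g dvd d * p" using ord_divides by blast
  moreover have "totient (p ^ 2) = p * (p - 1)" using totient_prime_power_Suc[OF p, of 1] by (simp add: numeral_2_eq_2)
  ultimately have "p * (p - 1) dvd d * p" using ord2 by simp
  then have A: "p - 1 dvd d" using p1 by (simp add: mult.commute)
  have "[g ^ (p - 1) = 1] (mod p)" using fermat_theorem[OF p] cop p
    by (metis coprime_commute prime_dvd_mult_iff coprime_absorb_left dvd_refl not_prime_unit prime_nat_iff coprime_def one_le_numeral) 
  then have B: "d dvd p - 1" unfolding d_def using ord_divides by blast
  have "d = p - 1" using A B by (simp add: dvd_antisym)
  then show ?thesis using p1 cop p by (simp add: residue_primroot_def d_def totient_prime)
qed


lemma prim_lift:
  assumes p: "prime p" "odd p" and g: "residue_primroot (p ^ 2) g" and k: "k > 0"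
  shows "residue_primroot (p ^ k) g"
proof -
  have gp: "residue_primroot p g" using prim_p2_imp_p[OF p(1) g] .
  have p1: "p > 1" using p prime_gt_1_nat by blast
  have ord2: "ord (p ^ 2) g = p * (p - 1)"
    using g totient_prime_power_Suc[OF p(1), of 1] by (simp add: residue_primroot_def numeral_2_eq_2)
  have "[g ^ (p - 1) \<noteq> 1] (mod p\<^sup>2)"
  proof
    assume "[g ^ (p - 1) = 1] (mod p\<^sup>2)"
    then have "p * (p - 1) dvd p - 1" using ord2 ord_divides by metis
    then have "p * (p - 1) \<le> p - 1" using p1 by (intro dvd_imp_le) auto
    then show False using p1 by (metis diff_is_0_eq less_irrefl mult_le_cancel2 nat_mult_le_cancel_disj not_less zero_less_diff mult_1)
  qed
  then show ?thesis using residue_primroot_prime_lift_iff[OF p gp] k by blast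
qed

lemma q_primroot_k:
  assumes p: "prime p" "odd p" and q: "primitive_mod_p2 p q" and k: "k \<ge> 2"
  shows "residue_primroot (p ^ k) (nat (q mod int (p ^ k)))"
proof -
  define gk where "gk = nat (q mod int (p ^ k))"
  define g2 where "g2 = nat (q mod int (p ^ 2))"
  have pk0: "int (p ^ k) > 0" and p20: "int (p ^ 2) > 0" using p prime_gt_0_nat by auto
  have igk: "int gk = q mod int (p ^ k)" unfolding gk_def using pk0 by simp
  have ig2: "int g2 = q mod int (p ^ 2)" unfolding g2_def using p20 by simp
  have dv: "int (p ^ 2) dvd int (p ^ k)" using k by (simp add: le_imp_power_dvd)
  have "[int gk = q] (mod int (p ^ k))" unfolding igk by simp
  then have "[int gk = q] (mod int (p ^ 2))" using dv cong_dvd_modulus by blast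
  moreover have "[q = int g2] (mod int (p ^ 2))" unfolding ig2 by (simp add: cong_sym)
  ultimately have "[int gk = int g2] (mod int (p ^ 2))" using cong_trans by blast
  then have "[gk = g2] (mod p ^ 2)" using cong_int_iff by blast
  then have "residue_primroot (p ^ 2) gk"
    using q residue_primroot_cong unfolding primitive_mod_p2_def g2_def by blast
  then show ?thesis unfolding gk_def[symmetric] using prim_lift[OF p] k by simp
qed

lemma unit_frac:
  assumes p: "prime p" and j: "plocal_unit p j"
  shows "\<exists>a b. \<not> int p dvd a \<and> \<not> int p dvd b \<and> j = of_int a / of_int b"
proof -
  obtain a b where ab: "\<not> int p dvd b" "b \<noteq> 0" "j = of_int a / of_int b"
    using j pl_elim[OF p] unfolding plocal_unit_def by blast
  have a0: "a \<noteq> 0" using j ab unfolding plocal_unit_def by auto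
  obtain c d where cd: "\<not> int p dvd d" "d \<noteq> 0" "inverse j = of_int c / of_int d"
    using j pl_elim[OF p] unfolding plocal_unit_def by blast
  have "of_int b / of_int a = (of_int c / of_int d :: rat)" using ab(3) cd(3) by simp
  then have e: "b * d = c * a" using a0 cd(2) by (simp add: frac_eq_eq) (metis of_int_eq_iff of_int_mult)
  have "\<not> int p dvd a"
  proof
    assume "int p dvd a"
    then have "int p dvd b * d" unfolding e by simp
    then show False using ab(1) cd(1) p by (simp add: prime_dvd_mult_iff)
  qed
  then show ?thesis using ab by blast
qed

lemma approx:
  assumes p: "prime p" "odd p" and q: "primitive_mod_p2 p q" and j: "plocal_unit p j"
  shows "\<exists>s::nat. plocal p ((j - of_int q ^ s) / of_nat p ^ K)"
proof -
  define k where "k = K + 2"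
  define m where "m = int (p ^ k)"
  have p1: "p > 1" using p prime_gt_1_nat by blast
  have pk1: "p ^ k > 1" unfolding k_def using p1 by (intro one_less_power) auto
  then have m1: "m > 1" unfolding m_def by linarith
  have pi: "prime (int p)" using p by simp
  obtain a b where ab: "\<not> int p dvd a" "\<not> int p dvd b" "j = of_int a / of_int b"
    using unit_frac[OF p(1) j] by blast
  have copm: "\<not> int p dvd x \<Longrightarrow> coprime x m" for x
    unfolding m_def of_nat_power using pi prime_imp_coprime[OF pi, of x] by (simp add: coprime_commute)
  obtain b' where b': "[b * b' = 1] (mod m)" using cong_solve_coprime_int copm[OF ab(2)] by blast
  define c where "c = (a * b') mod m"
  have cb: "[c * b = a] (mod m)"
  proof -
    have "[c * b = a * b' * b] (mod m)" unfolding c_def by (simp add: cong_mult)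
    moreover have "[a * (b * b') = a * 1] (mod m)" by (rule cong_mult[OF cong_refl b'])
    then have "[a * b' * b = a] (mod m)" by (simp add: mult_ac)
    ultimately show ?thesis by (rule cong_trans)
  qed
  have pm: "int p dvd m" unfolding m_def k_def by simp
  have "\<not> int p dvd c"
  proof
    assume pc: "int p dvd c"
    have "m dvd c * b - a" using cb by (simp add: cong_iff_dvd_diff)
    then have "int p dvd c * b - a" using pm dvd_trans by blast
    moreover have "int p dvd c * b" using pc by simp
    ultimately have "int p dvd c * b - (c * b - a)" by (rule dvd_diff[rotated])
    then show False using ab by simp
  qed
  then have copc: "coprime c m" using copm by blast
  have c0: "0 \<le> c" "c < m" unfolding c_def using m1 by auto
  have cn0: "c \<noteq> 0" using copc m1 by auto
  have "coprime (int (nat c)) (int (p ^ k))" using copc c0 unfolding m_def by simp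
  then have "coprime (nat c) (p ^ k)" by (simp only: coprime_int_iff)
  moreover have ncl: "nat c < p ^ k" using c0 nat_less_iff[of c "p ^ k"] unfolding m_def by simp
  ultimately have tot: "nat c \<in> totatives (p ^ k)"
    using c0 cn0 unfolding totatives_def by auto
  have prim: "residue_primroot (p ^ k) (nat (q mod int (p ^ k)))"
    using q_primroot_k[OF p q, of k] unfolding k_def by simp
  define g where "g = nat (q mod int (p ^ k))"
  have "(\<lambda>i. g ^ i mod p ^ k) ` {..<totient (p ^ k)} = totatives (p ^ k)"
    using residue_primroot_is_generator[OF pk1 prim] unfolding bij_betw_def g_def by blast
  then obtain i where i: "g ^ i mod p ^ k = nat c" using tot by (metis (no_types, lifting) imageE)
  have "[g ^ i = nat c] (mod p ^ k)" using i ncl unfolding cong_def by simp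
  then have "[int (g ^ i) = int (nat c)] (mod m)" unfolding m_def by (simp only: cong_int_iff)
  moreover have "int (g ^ i) = (q mod m) ^ i"
  proof -
    have "0 \<le> q mod m" using m1 by simp
    then show ?thesis unfolding g_def m_def by simp
  qed
  ultimately have "[(q mod m) ^ i = c] (mod m)" using c0 by simp
  moreover have "[q ^ i = (q mod m) ^ i] (mod m)" by (simp add: cong_pow)
  ultimately have "[q ^ i = c] (mod m)" using cong_trans by blast
  then have "[q ^ i * b = c * b] (mod m)" by (simp add: cong_mult)
  then have "[q ^ i * b = a] (mod m)" using cb cong_trans by blast
  then have "m dvd a - q ^ i * b" by (simp add: cong_iff_dvd_diff dvd_diff_commute)
  then obtain t where t: "a - q ^ i * b = m * t" by (elim dvdE)
  have b0: "b \<noteq> 0" using ab by auto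
  have eq: "(j - of_int q ^ i) / of_nat p ^ K = of_int (int p ^ 2 * t) / of_int b"
  proof -
    have "j - of_int q ^ i = (of_int a - of_int q ^ i * of_int b) / of_int b"
      using ab(3) b0 by (simp add: field_simps)
    also have "of_int a - of_int q ^ i * of_int b = (of_int (a - q ^ i * b) :: rat)" by simp
    also have "\<dots> = of_int m * of_int t" unfolding t by simp
    finally have "j - of_int q ^ i = of_int m * of_int t / of_int b" .
    moreover have "(of_int m :: rat) = of_nat p ^ K * of_nat p ^ 2" unfolding m_def k_def by (simp add: power_add power2_eq_square)
    moreover have "(of_nat p :: rat) ^ K \<noteq> 0" using p1 by simp
    ultimately show ?thesis by (simp add: field_simps power2_eq_square)
  qed
  have "plocal p ((j - of_int q ^ i) / of_nat p ^ K)" unfolding eq by (rule pl_intro[OF p(1) ab(2)])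
  then show ?thesis by blast
qed


lemma powi_diff_factor:
  assumes p: "prime p" and j: "plocal_unit p j" and j': "plocal_unit p j'"
  shows "\<exists>d. plocal p d \<and> j powi e - j' powi e = (j - j') * d"
proof (cases "e \<ge> 0")
  case True
  define n where "n = nat e"
  have n: "e = int n" unfolding n_def using True by simp
  have "j ^ n - j' ^ n = (j - j') * (\<Sum>i<n. j' ^ (n - Suc i) * j ^ i)" by (rule power_diff_sumr2)
  moreover have "plocal p (\<Sum>i<n. j' ^ (n - Suc i) * j ^ i)"
  proof -
    have jl: "plocal p j" "plocal p j'" using j j' unfolding plocal_unit_def by auto
    have "plocal p (j' ^ (n - Suc i) * j ^ i)" for i
      using pl_mult[OF p pl_power[OF p jl(2)] pl_power[OF p jl(1)]] .
    then show ?thesis by (intro pl_sum[OF p])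
  qed
  ultimately show ?thesis unfolding n power_int_of_nat by blast
next
  case False
  define n where "n = nat (- e)"
  have n: "e = - int n" unfolding n_def using False by simp
  define a where "a = inverse j"
  define b where "b = inverse j'"
  have al: "plocal p a" "plocal p b" using j j' unfolding a_def b_def plocal_unit_def by auto
  have j0: "j \<noteq> 0" "j' \<noteq> 0" using j j' unfolding plocal_unit_def by auto
  have "j powi e - j' powi e = a ^ n - b ^ n"
    unfolding n a_def b_def by (simp add: power_int_minus power_inverse)
  also have "\<dots> = (a - b) * (\<Sum>i<n. b ^ (n - Suc i) * a ^ i)" by (rule power_diff_sumr2)
  finally have e1: "j powi e - j' powi e = (a - b) * (\<Sum>i<n. b ^ (n - Suc i) * a ^ i)" .
  have e2: "a - b = (j - j') * (- (a * b))" unfolding a_def b_def using j0 by (simp add: field_simps)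
  have "j powi e - j' powi e = (j - j') * (- (a * b) * (\<Sum>i<n. b ^ (n - Suc i) * a ^ i))"
    unfolding e1 e2 by (simp add: mult.assoc)
  moreover have "plocal p (- (a * b) * (\<Sum>i<n. b ^ (n - Suc i) * a ^ i))"
  proof -
    have "plocal p (b ^ (n - Suc i) * a ^ i)" for i
      using pl_mult[OF p pl_power[OF p al(2)] pl_power[OF p al(1)]] .
    then have "plocal p (\<Sum>i<n. b ^ (n - Suc i) * a ^ i)" by (intro pl_sum[OF p])
    then show ?thesis by (intro pl_mult[OF p pl_uminus[OF p pl_mult[OF p al]]])
  qed
  ultimately show ?thesis by blast
qed

locale qsetup2 = qsetup +
  assumes podd: "odd p" and qprim: "primitive_mod_p2 p q"
begin

lemma adams_in_opA:
  assumes j: "plocal_unit p j"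
  shows "adams j \<in> opA p q"
  unfolding opA_iff
proof (intro conjI allI impI)
  fix n
  obtain C :: int where C: "C \<noteq> 0" "\<And>u. (\<forall>i\<in>{1..Suc n}. plocal p (u (qexp i))) \<Longrightarrow>
              (\<forall>r<Suc n. plocal p (of_int C * ncoef q u r))" using Den by blast
  define K where "K = multiplicity (int p) C"
  obtain s where s: "plocal p ((j - Q ^ s) / of_nat p ^ K)" using approx[OF pp podd qprim j] by blast
  define g where "g = adams (Q ^ s)"
  have g: "g \<in> opA p q" unfolding g_def by (rule adams_Qpow)
  define P where "P = (of_nat p ^ K :: rat)"
  have P0: "P \<noteq> 0" unfolding P_def using pp prime_gt_0_nat by simp
  define u where "u k = (adams j k - g k) / P" for k
  have Qs: "plocal_unit p (Q ^ s)" using plu_powi_unit[OF pp Q_unit, of "int s"] by simp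
  have ul: "plocal p (u k)" for k
  proof -
    obtain d where d: "plocal p d" "j powi k - (Q ^ s) powi k = (j - Q ^ s) * d"
      using powi_diff_factor[OF pp j Qs] by blast
    have e: "u k = ((j - Q ^ s) / P) * d" unfolding u_def g_def adams_def d(2) by simp
    show ?thesis unfolding e by (rule pl_mult[OF pp]) (use s d(1) in \<open>simp_all add: P_def\<close>)
  qed
  have aj: "adams j = (\<lambda>k. 1 * g k + P * u k)" unfolding u_def using P0 by (auto simp: field_simps)
  have "ncoef q (adams j) n = ncoef q g n + P * ncoef q u n"
    unfolding aj ncoef_lin by simp
  moreover have "plocal p (ncoef q g n)" using g unfolding opA_iff by simp
  moreover have "plocal p (P * ncoef q u n)"
  proof -
    have "plocal p (of_int C * ncoef q u n)" using C(2)[of u] ul by auto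
    moreover have "plocal p (P / of_int C)" unfolding P_def K_def using pl_ppow_div[OF pp C(1)] by simp
    ultimately have "plocal p ((P / of_int C) * (of_int C * ncoef q u n))" by (rule pl_mult[OF pp, rotated])
    moreover have "P * ncoef q u n = (P / of_int C) * (of_int C * ncoef q u n)" using C(1) by simp
    ultimately show ?thesis by simp
  qed
  ultimately show "plocal p (ncoef q (adams j) n)" using pl_add[OF pp] by simp
qed simp

end


context qsetup
begin

lemma theta_coeffs: "\<exists>c. (\<forall>t. plocal p (c t)) \<and> (\<forall>t>r. c t = 0) \<and> (\<forall>X. Theta q r X = (\<Sum>t\<le>r. c t * X ^ t))"
proof (induction r)
  case 0
  show ?case by (intro exI[of _ "\<lambda>t. if t = 0 then 1 else 0"]) auto
next
  case (Suc r)
  then obtain c where c: "\<And>t. plocal p (c t)" "\<And>t. t > r \<Longrightarrow> c t = 0"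
    "\<And>X. Theta q r X = (\<Sum>t\<le>r. c t * X ^ t)" by blast
  define x where "x = xn (Suc r)"
  define c' where "c' t = (if t = 0 then 0 else c (t - 1)) - x * c t" for t
  have "plocal p (c' t)" for t unfolding c'_def x_def
    using c(1) by (intro pl_diff[OF pp] pl_mult[OF pp] pl_xn) auto
  moreover have "c' t = 0" if "t > Suc r" for t unfolding c'_def using that c(2) by auto
  moreover have "Theta q (Suc r) X = (\<Sum>t\<le>Suc r. c' t * X ^ t)" for X
  proof -
    have A: "(\<Sum>t\<le>Suc r. (if t = 0 then 0 else c (t - 1)) * X ^ t) = (\<Sum>t\<le>r. c t * X ^ t) * X"
      by (subst sum.atMost_Suc_shift) (simp add: sum_distrib_right sum_distrib_left algebra_simps)
    have B: "(\<Sum>t\<le>Suc r. c t * X ^ t) = (\<Sum>t\<le>r. c t * X ^ t)" using c(2)[of "Suc r"] by simp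
    have "(\<Sum>t\<le>Suc r. c' t * X ^ t) = (\<Sum>t\<le>Suc r. (if t = 0 then 0 else c (t - 1)) * X ^ t)
          - x * (\<Sum>t\<le>Suc r. c t * X ^ t)"
      unfolding c'_def by (simp add: sum_subtractf sum_distrib_left algebra_simps)
    also have "\<dots> = Theta q r X * (X - x)" unfolding A B c(3) by (simp add: algebra_simps)
    finally show ?thesis unfolding Theta_Suc x_def by simp
  qed
  ultimately show ?case by blast
qed

lemma polyP:
  assumes g: "g \<in> opA p q"
  shows "\<exists>b. (\<forall>t. plocal p (b t)) \<and> (\<forall>i\<in>{1..n}. g (qexp i) = (\<Sum>t<n. b t * (Q ^ t) powi (qexp i)))"
proof -
  have "\<forall>r. \<exists>c. (\<forall>t. plocal p (c t)) \<and> (\<forall>t>r. c t = 0) \<and> (\<forall>X. Theta q r X = (\<Sum>t\<le>r. c t * X ^ t))"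
    using theta_coeffs by blast
  then obtain cc where cc: "\<And>r t. plocal p (cc r t)" "\<And>r t. t > r \<Longrightarrow> cc r t = 0"
    "\<And>r X. Theta q r X = (\<Sum>t\<le>r. cc r t * X ^ t)" by metis
  have cc': "Theta q r X = (\<Sum>t<n. cc r t * X ^ t)" if "r < n" for r X
  proof -
    have "(\<Sum>t<n. cc r t * X ^ t) = (\<Sum>t\<le>r. cc r t * X ^ t)"
      using that cc(2) by (intro sum.mono_neutral_right) auto
    then show ?thesis using cc(3) by simp
  qed
  define a where "a = ncoef q g"
  have al: "plocal p (a r)" for r using g unfolding opA_iff a_def by simp
  define b where "b t = (\<Sum>r<n. a r * cc r t)" for t
  have "plocal p (b t)" for t unfolding b_def using al cc(1) by (intro pl_sum[OF pp] pl_mult[OF pp])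
  moreover have "g (qexp i) = (\<Sum>t<n. b t * (Q ^ t) powi (qexp i))" if i: "i \<in> {1..n}" for i
  proof -
    have "g (qexp i) = (\<Sum>r<i. a r * Theta q r (xn i))"
      unfolding a_def using i by (subst ncoef_repr) (simp add: xn_qexp)
    also have "\<dots> = (\<Sum>r<n. a r * Theta q r (xn i))"
      using i Theta_vanish' by (intro sum.mono_neutral_left) auto
    also have "\<dots> = (\<Sum>r<n. \<Sum>t<n. a r * cc r t * xn i ^ t)"
      by (intro sum.cong refl) (simp add: cc' sum_distrib_left mult.assoc)
    also have "\<dots> = (\<Sum>t<n. b t * xn i ^ t)"
      unfolding b_def by (subst sum.swap) (simp add: sum_distrib_right)
    also have "\<dots> = (\<Sum>t<n. b t * (Q ^ t) powi (qexp i))"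
      unfolding qnode_def by (simp add: power_int_power power_int_power' mult.commute)
    finally show ?thesis .
  qed
  ultimately show ?thesis by blast
qed

end


locale qmod = qsetup2 +
  fixes act :: "(int \<Rightarrow> rat) \<Rightarrow> 'm::ab_group_add \<Rightarrow> 'm"
  assumes amod: "is_A_module p q act"
begin

lemma act_add: "a \<in> opA p q \<Longrightarrow> b \<in> opA p q \<Longrightarrow> act (\<lambda>k. a k + b k) w = act a w + act b w"
  using amod unfolding is_A_module_def by blast

lemma act_mult: "a \<in> opA p q \<Longrightarrow> b \<in> opA p q \<Longrightarrow> act (\<lambda>k. a k * b k) w = act a (act b w)"
  using amod unfolding is_A_module_def by blast

lemma act_one: "act (\<lambda>k. 1) w = w"
  using amod unfolding is_A_module_def by blast

lemma act_lin: "a \<in> opA p q \<Longrightarrow> act a (w + w') = act a w + act a w'"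
  using amod unfolding is_A_module_def by blast

lemma act_zero: "act (\<lambda>k. 0) w = 0"
proof -
  have "act (\<lambda>k. 0 + 0) w = act (\<lambda>k. 0) w + act (\<lambda>k. 0) w" by (rule act_add) auto
  then show ?thesis by simp
qed

lemma act_diff: "a \<in> opA p q \<Longrightarrow> b \<in> opA p q \<Longrightarrow> act (\<lambda>k. a k - b k) w = act a w - act b w"
proof -
  assume a: "a \<in> opA p q" and b: "b \<in> opA p q"
  have "act (\<lambda>k. b k + (a k - b k)) w = act b w + act (\<lambda>k. a k - b k) w"
    by (rule act_add) (use a b in auto)
  then show ?thesis by (simp add: algebra_simps)
qed

lemma act_sum: "finite T \<Longrightarrow> (\<And>t. t \<in> T \<Longrightarrow> F t \<in> opA p q) \<Longrightarrow>
   act (\<lambda>k. \<Sum>t\<in>T. F t k) w = (\<Sum>t\<in>T. act (F t) w)"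
proof (induction T rule: finite_induct)
  case empty
  then show ?case using act_zero by simp
next
  case (insert x T)
  have "act (\<lambda>k. \<Sum>t\<in>insert x T. F t k) w = act (\<lambda>k. F x k + (\<Sum>t\<in>T. F t k)) w"
    using insert(1,2) by simp
  also have "\<dots> = act (F x) w + act (\<lambda>k. \<Sum>t\<in>T. F t k) w"
    using insert by (intro act_add opA_sum) auto
  finally show ?case using insert by simp
qed

lemma scal_in: "plocal p c \<Longrightarrow> scal c \<in> opA p q"
  unfolding scal_def using opA_smult[OF _ opA_one, of c] by simp

lemma act_scal_mult: "plocal p c \<Longrightarrow> f \<in> opA p q \<Longrightarrow> act (scal c) (act f w) = act (\<lambda>k. c * f k) w"
  using act_mult[OF scal_in] unfolding scal_def by simp

lemma act_scal_sum: "finite T \<Longrightarrow> (\<And>t. t \<in> T \<Longrightarrow> plocal p (c t)) \<Longrightarrow>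
   act (scal (\<Sum>t\<in>T. c t)) w = (\<Sum>t\<in>T. act (scal (c t)) w)"
  using act_sum[of T "\<lambda>t. scal (c t)" w] scal_in unfolding scal_def by simp

lemma act_scal_1: "act (scal 1) w = w"
  unfolding scal_def using act_one .

end

locale qmodx = qmod +
  fixes x :: "'m::ab_group_add" and n :: nat
  assumes disc: "\<And>a. a \<in> opA_from p q n \<Longrightarrow> act a x = 0"
begin

lemma K:
  assumes "f \<in> opA p q" "g \<in> opA p q" "\<And>i. i \<in> {1..n} \<Longrightarrow> f (qexp i) = g (qexp i)"
  shows "act f x = act g x"
proof -
  have "(\<lambda>k. f k - g k) \<in> opA_from p q n"
  proof (rule opA_vanish)
    show "(\<lambda>k. f k - g k) \<in> opA p q" using assms(1,2) by (rule opA_diff)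
  qed (use assms(3) in simp)
  then have "act (\<lambda>k. f k - g k) x = 0" by (rule disc)
  then show ?thesis using act_diff[OF assms(1,2)] by simp
qed

definition "Ax = {act f x | f. f \<in> opA p q}"

lemma Ax_add: "y \<in> Ax \<Longrightarrow> y' \<in> Ax \<Longrightarrow> y + y' \<in> Ax"
proof -
  assume "y \<in> Ax" "y' \<in> Ax"
  then obtain f f' where f: "f \<in> opA p q" "y = act f x" "f' \<in> opA p q" "y' = act f' x"
    unfolding Ax_def by blast
  have "y + y' = act (\<lambda>k. f k + f' k) x" using f act_add by simp
  moreover have "(\<lambda>k. f k + f' k) \<in> opA p q" using f by (intro opA_add)
  ultimately show ?thesis unfolding Ax_def by blast
qed

lemma Ax_zero: "0 \<in> Ax"
  unfolding Ax_def by (intro CollectI exI[of _ "\<lambda>k. 0"]) (simp add: act_zero opA_zero)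

lemma Ax_sum: "finite S \<Longrightarrow> (\<And>s. s \<in> S \<Longrightarrow> h s \<in> Ax) \<Longrightarrow> sum h S \<in> Ax"
  by (induction S rule: finite_induct) (auto intro: Ax_add Ax_zero)

lemma Ax_scal: "plocal p c \<Longrightarrow> y \<in> Ax \<Longrightarrow> act (scal c) y \<in> Ax"
proof -
  assume c: "plocal p c" and "y \<in> Ax"
  then obtain f where f: "f \<in> opA p q" "y = act f x" unfolding Ax_def by blast
  have "act (scal c) y = act (\<lambda>k. c * f k) x" using f act_scal_mult c by simp
  moreover have "(\<lambda>k. c * f k) \<in> opA p q" using f c by (intro opA_smult)
  ultimately show ?thesis unfolding Ax_def by blast
qed

lemma Qpow_unit: "plocal_unit p (Q ^ t)"
  using plu_powi_unit[OF pp Q_unit, of "int t"] by simp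

lemma Qpow_inj: "inj (\<lambda>t::nat. Q ^ t)"
proof (rule injI)
  fix s t :: nat assume "Q ^ s = Q ^ t"
  then have "Q powi int s = Q powi int t" by simp
  then have "int s = int t" by (rule powi_inj_rat[OF Qbig])
  then show "s = t" by simp
qed

lemma Ax_poly:
  assumes f: "f \<in> opA p q"
  shows "\<exists>b. (\<forall>t. plocal p (b t)) \<and> act f x = act (\<lambda>k. \<Sum>t<n. b t * adams (Q ^ t) k) x \<and>
      act f x = (\<Sum>t<n. act (scal (b t)) (act (adams (Q ^ t)) x))"
proof -
  obtain b where b: "\<And>t. plocal p (b t)" "\<And>i. i \<in> {1..n} \<Longrightarrow> f (qexp i) = (\<Sum>t<n. b t * (Q ^ t) powi (qexp i))"
    using polyP[OF f] by blast
  have F: "(\<lambda>k. \<Sum>t<n. b t * adams (Q ^ t) k) \<in> opA p q"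
    using b(1) by (intro opA_sum opA_smult adams_Qpow) auto
  have e1: "act f x = act (\<lambda>k. \<Sum>t<n. b t * adams (Q ^ t) k) x"
    using f F b(2) by (intro K) (auto simp: adams_def)
  also have "\<dots> = (\<Sum>t<n. act (\<lambda>k. b t * adams (Q ^ t) k) x)"
    using b(1) by (intro act_sum opA_smult adams_Qpow) auto
  also have "\<dots> = (\<Sum>t<n. act (scal (b t)) (act (adams (Q ^ t)) x))"
    using b(1) by (intro sum.cong refl act_scal_mult[symmetric] adams_Qpow) auto
  finally show ?thesis using e1 b(1) by blast
qed

lemma Rcyc_eq: "Rcyc p act x = Ax"
proof
  show "Rcyc p act x \<subseteq> Ax"
  proof
    fix y assume "y \<in> Rcyc p act x"
    then obtain J c where y: "y = (\<Sum>j\<in>J. act (scal (c j)) (act (adams j) x))" "finite J"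
      "\<forall>j\<in>J. plocal_unit p j" "\<forall>j\<in>J. plocal p (c j)"
      unfolding Rcyc_def by blast
    show "y \<in> Ax" unfolding y(1)
      using y(2-4) by (intro Ax_sum Ax_scal) (auto simp: Ax_def intro: adams_in_opA)
  qed
next
  show "Ax \<subseteq> Rcyc p act x"
  proof
    fix y assume "y \<in> Ax"
    then obtain f where f: "f \<in> opA p q" "y = act f x" unfolding Ax_def by blast
    obtain b where b: "\<And>t. plocal p (b t)" "y = (\<Sum>t<n. act (scal (b t)) (act (adams (Q ^ t)) x))"
      using Ax_poly[OF f(1)] f(2) by blast
    define J where "J = (\<lambda>t. Q ^ t) ` {..<n}"
    define c where "c j = b (inv_into {..<n} (\<lambda>t. Q ^ t) j)" for j
    have inj: "inj_on (\<lambda>t. Q ^ t) {..<n}" using Qpow_inj by (simp add: inj_on_def inj_def)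
    have "(\<Sum>j\<in>J. act (scal (c j)) (act (adams j) x)) = (\<Sum>t<n. act (scal (c (Q ^ t))) (act (adams (Q ^ t)) x))"
      unfolding J_def using inj by (simp add: sum.reindex)
    also have "\<dots> = y" unfolding b(2) c_def using inj by (intro sum.cong refl) (simp add: inv_into_f_f)
    finally have "y = (\<Sum>j\<in>J. act (scal (c j)) (act (adams j) x))" by simp
    moreover have "finite J" "\<forall>j\<in>J. plocal_unit p j" "\<forall>j\<in>J. plocal p (c j)"
      unfolding J_def c_def using Qpow_unit b(1) by auto
    ultimately show "y \<in> Rcyc p act x" unfolding Rcyc_def by blast
  qed
qed

end


context qmodx
begin

lemma adams_act:
  assumes f: "f \<in> opA p q" and j: "plocal_unit p j"
  shows "\<exists>g\<in>opA p q. act (adams j) (act f x) = act g x \<and>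
           (\<forall>l\<in>{1..n}. g (qexp l) = j powi (qexp l) * f (qexp l))"
proof -
  obtain b where b: "\<And>t. plocal p (b t)" "\<And>i. i \<in> {1..n} \<Longrightarrow> f (qexp i) = (\<Sum>t<n. b t * (Q ^ t) powi (qexp i))"
    using polyP[OF f] by blast
  define F where "F k = (\<Sum>t<n. b t * adams (Q ^ t) k)" for k
  have F: "F \<in> opA p q" unfolding F_def
    using b(1) by (intro opA_sum opA_smult adams_Qpow) auto
  have e1: "act f x = act F x"
    using f F b(2) by (intro K) (auto simp: adams_def F_def)
  define g where "g k = (\<Sum>t<n. b t * adams (j * Q ^ t) k)" for k
  have g: "g \<in> opA p q" unfolding g_def
    using b(1) by (intro opA_sum opA_smult adams_in_opA plu_mult[OF pp j Qpow_unit]) auto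
  have gF: "g = (\<lambda>k. adams j k * F k)"
    unfolding g_def F_def adams_def by (auto simp: power_int_mult_distrib sum_distrib_left algebra_simps)
  have "act (adams j) (act f x) = act g x"
    unfolding e1 gF using act_mult[OF adams_in_opA[OF j] F] by simp
  moreover have "g (qexp l) = j powi (qexp l) * f (qexp l)" if "l \<in> {1..n}" for l
    unfolding gF using b(2)[OF that] by (simp add: F_def adams_def)
  ultimately show ?thesis using g by blast
qed

lemma cond_a: "\<exists>G. finite G \<and> G \<subseteq> Rcyc p act x \<and> Rcyc p act x = zp_span p act G"
proof -
  define w where "w t = act (adams (Q ^ t)) x" for t
  define G where "G = w ` {..<n}"
  have GA: "G \<subseteq> Ax" unfolding G_def w_def Ax_def using adams_Qpow by blast
  have "Ax \<subseteq> zp_span p act G"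
  proof
    fix y assume "y \<in> Ax"
    then obtain f where f: "f \<in> opA p q" "y = act f x" unfolding Ax_def by blast
    obtain b where b: "\<And>t. plocal p (b t)" "y = (\<Sum>t<n. act (scal (b t)) (w t))"
      using Ax_poly[OF f(1)] f(2) unfolding w_def by blast
    define c where "c g = (\<Sum>t\<in>{t\<in>{..<n}. w t = g}. b t)" for g
    have "y = (\<Sum>g\<in>G. \<Sum>t\<in>{t\<in>{..<n}. w t = g}. act (scal (b t)) (w t))"
      unfolding b(2) G_def by (rule sum.image_gen) simp
    also have "\<dots> = (\<Sum>g\<in>G. \<Sum>t\<in>{t\<in>{..<n}. w t = g}. act (scal (b t)) g)"
      by (intro sum.cong refl) auto
    also have "\<dots> = (\<Sum>g\<in>G. act (scal (c g)) g)"
      unfolding c_def by (intro sum.cong refl act_scal_sum[symmetric]) (auto simp: b(1))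
    finally have "y = (\<Sum>g\<in>G. act (scal (c g)) g)" .
    moreover have "\<forall>g\<in>G. plocal p (c g)" unfolding c_def using b(1) by (auto intro: pl_sum[OF pp])
    ultimately show "y \<in> zp_span p act G" unfolding zp_span_def by blast
  qed
  moreover have "zp_span p act G \<subseteq> Ax"
  proof
    fix y assume "y \<in> zp_span p act G"
    then obtain c where c: "y = (\<Sum>g\<in>G. act (scal (c g)) g)" "\<forall>g\<in>G. plocal p (c g)"
      unfolding zp_span_def by blast
    show "y \<in> Ax" unfolding c(1) using c(2) GA G_def
      by (intro Ax_sum Ax_scal) auto
  qed
  ultimately have "Rcyc p act x = zp_span p act G" unfolding Rcyc_eq by blast
  moreover have "finite G" unfolding G_def by simp
  ultimately show ?thesis using GA Rcyc_eq by blast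
qed

lemma cond_b:
  assumes j: "plocal_unit p j" and y: "y \<in> Rcyc p act x"
  shows "\<exists>c zs. c \<noteq> 0 \<and> plocal p c \<and> act (scal c) y = sum_list (map fst zs) \<and>
          (\<forall>(z, k)\<in>set zs. z \<in> Rcyc p act x \<and>
             (\<exists>d. d \<noteq> 0 \<and> plocal p d \<and>
                act (scal d) (act (adams j) z - act (scal (j powi k)) z) = 0))"
proof -
  obtain f where f: "f \<in> opA p q" "y = act f x" using y unfolding Rcyc_eq Ax_def by blast
  obtain C :: int where C: "C \<noteq> 0" "\<And>v. (\<forall>i\<in>{1..n}. plocal p (v (qexp i))) \<Longrightarrow>
       (\<exists>h\<in>opA p q. \<forall>i\<in>{1..n}. h (qexp i) = of_int C * v (qexp i))" using interp by blast
  have "\<forall>i. \<exists>h. h \<in> opA p q \<and> (i \<ge> 1 \<longrightarrow> (\<forall>l\<in>{1..n}. h (qexp l) = of_int C * (if l = i then f (qexp l) else 0)))"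
  proof
    fix i
    show "\<exists>h. h \<in> opA p q \<and> (i \<ge> 1 \<longrightarrow> (\<forall>l\<in>{1..n}. h (qexp l) = of_int C * (if l = i then f (qexp l) else 0)))"
    proof (cases "i \<ge> 1")
      case False
      then show ?thesis using opA_zero by blast
    next
      case True
      define v where "v k = (if k = qexp i then f k else 0)" for k
      have "\<forall>l\<in>{1..n}. plocal p (v (qexp l))" unfolding v_def using opA_vals[OF f(1)] by simp
      then obtain h where h: "h \<in> opA p q" "\<forall>l\<in>{1..n}. h (qexp l) = of_int C * v (qexp l)" using C(2) by blast
      have "v (qexp l) = (if l = i then f (qexp l) else 0)" if "l \<in> {1..n}" for l
        unfolding v_def using that True qexp_inj[of l i] by auto
      then show ?thesis using h by (intro exI[of _ h]) auto
    qed
  qed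
  from choice[OF this] obtain H where H0: "\<forall>i. H i \<in> opA p q \<and> (i \<ge> 1 \<longrightarrow> (\<forall>l\<in>{1..n}. H i (qexp l) = of_int C * (if l = i then f (qexp l) else 0)))"
    by blast
  have H: "\<And>i. H i \<in> opA p q"
     "\<And>i l. i \<ge> 1 \<Longrightarrow> l \<in> {1..n} \<Longrightarrow> H i (qexp l) = of_int C * (if l = i then f (qexp l) else 0)"
    using H0 by auto
  define zs where "zs = map (\<lambda>i. (act (H i) x, qexp i)) [1..<Suc n]"
  have sumzs: "sum_list (map fst zs) = (\<Sum>i\<in>{1..n}. act (H i) x)"
  proof -
    have "sum_list (map fst zs) = sum_list (map (\<lambda>i. act (H i) x) [1..<Suc n])"
      unfolding zs_def by (simp add: comp_def)
    also have "\<dots> = sum (\<lambda>i. act (H i) x) (set [1..<Suc n])"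
      by (rule sum_set_upt_conv_sum_list_nat[symmetric])
    also have "set [1..<Suc n] = {1..n}" by auto
    finally show ?thesis .
  qed
  have Cl: "plocal p (of_int C)" by simp
  have "act (scal (of_int C)) y = act (\<lambda>k. of_int C * f k) x"
    unfolding f(2) using act_scal_mult[OF Cl f(1)] .
  also have "\<dots> = act (\<lambda>k. \<Sum>i\<in>{1..n}. H i k) x"
  proof (rule K)
    show "(\<lambda>k. of_int C * f k) \<in> opA p q" using f(1) Cl by (rule opA_smult[rotated])
    show "(\<lambda>k. \<Sum>i\<in>{1..n}. H i k) \<in> opA p q" using H(1) by (intro opA_sum) auto
    fix l assume l: "l \<in> {1..n}"
    have "(\<Sum>i\<in>{1..n}. H i (qexp l)) = (\<Sum>i\<in>{1..n}. of_int C * (if l = i then f (qexp l) else 0))"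
      using H(2)[OF _ l] by (intro sum.cong refl) auto
    also have "\<dots> = (\<Sum>i\<in>{1..n}. if l = i then of_int C * f (qexp l) else 0)"
      by (intro sum.cong refl) auto
    also have "\<dots> = of_int C * f (qexp l)" using l by (simp only: sum.delta' finite_atLeastAtMost if_True)
    finally show "of_int C * f (qexp l) = (\<Sum>i\<in>{1..n}. H i (qexp l))" by simp
  qed
  also have "\<dots> = (\<Sum>i\<in>{1..n}. act (H i) x)" using H(1) by (intro act_sum) auto
  finally have E: "act (scal (of_int C)) y = sum_list (map fst zs)" unfolding sumzs .
  have Z: "z \<in> Rcyc p act x \<and> (\<exists>d. d \<noteq> 0 \<and> plocal p d \<and>
                act (scal d) (act (adams j) z - act (scal (j powi k)) z) = 0)" if zk: "(z, k) \<in> set zs" for z k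
  proof -
    have "(z, k) \<in> (\<lambda>i. (act (H i) x, qexp i)) ` set [1..<Suc n]" using zk unfolding zs_def by simp
    also have "set [1..<Suc n] = {1..n}" by auto
    finally obtain i where i: "i \<in> {1..n}" "z = act (H i) x" "k = qexp i" by blast
    have zR: "z \<in> Rcyc p act x" unfolding Rcyc_eq Ax_def i(2) using H(1) by blast
    obtain g where g: "g \<in> opA p q" "act (adams j) z = act g x"
        "\<And>l. l \<in> {1..n} \<Longrightarrow> g (qexp l) = j powi (qexp l) * H i (qexp l)"
      using adams_act[OF H(1) j] i(2) by blast
    have jl: "plocal p (j powi k)" using plu_powi[OF pp j] .
    have "act (scal (j powi k)) z = act (\<lambda>k'. j powi k * H i k') x"
      unfolding i(2) using act_scal_mult[OF jl H(1)] .
    also have "\<dots> = act g x"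
    proof (rule K)
      show "(\<lambda>k'. j powi k * H i k') \<in> opA p q" using H(1) jl by (rule opA_smult[rotated])
      show "g \<in> opA p q" by fact
      fix l assume l: "l \<in> {1..n}"
      show "j powi k * H i (qexp l) = g (qexp l)" unfolding g(3)[OF l] using H(2)[of i l] l i(1,3) by auto
    qed
    finally have "act (adams j) z - act (scal (j powi k)) z = 0" using g(2) by simp
    then have "act (scal 1) (act (adams j) z - act (scal (j powi k)) z) = 0" using act_scal_1 by simp
    then show ?thesis using zR by (intro conjI exI[of _ 1]) auto
  qed
  show ?thesis using C(1) Cl E Z by (intro exI[of _ "of_int C"] exI[of _ zs]) auto
qed

lemma cond_c:
  assumes m: "m \<ge> 1"
  shows "\<exists>k0. \<forall>k\<ge>k0. \<forall>j j'. plocal_unit p j \<longrightarrow> plocal_unit p j' \<longrightarrow>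
        plocal p ((j - j') / of_nat (p ^ k)) \<longrightarrow>
        (\<forall>y\<in>Rcyc p act x. \<exists>z\<in>Rcyc p act x.
           act (adams j) y - act (adams j') y = act (scal (of_nat (p ^ m))) z)"
proof -
  obtain C :: int where C: "C \<noteq> 0" "\<And>v. (\<forall>i\<in>{1..n}. plocal p (v (qexp i))) \<Longrightarrow>
       (\<exists>h\<in>opA p q. \<forall>i\<in>{1..n}. h (qexp i) = of_int C * v (qexp i))" using interp by blast
  define M where "M = multiplicity (int p) C"
  have p0: "(of_nat p :: rat) \<noteq> 0" using pp prime_gt_0_nat by simp
  show ?thesis
  proof (intro exI[of _ "m + M"] allI impI ballI)
    fix k j j' y
    assume k: "m + M \<le> k" and j: "plocal_unit p j" and j': "plocal_unit p j'"
      and jj: "plocal p ((j - j') / of_nat (p ^ k))" and y: "y \<in> Rcyc p act x"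
    obtain f where f: "f \<in> opA p q" "y = act f x" using y unfolding Rcyc_eq Ax_def by blast
    obtain g where g: "g \<in> opA p q" "act (adams j) y = act g x"
        "\<And>l. l \<in> {1..n} \<Longrightarrow> g (qexp l) = j powi (qexp l) * f (qexp l)"
      using adams_act[OF f(1) j] f(2) by blast
    obtain g' where g': "g' \<in> opA p q" "act (adams j') y = act g' x"
        "\<And>l. l \<in> {1..n} \<Longrightarrow> g' (qexp l) = j' powi (qexp l) * f (qexp l)"
      using adams_act[OF f(1) j'] f(2) by blast
    define P where "P = (of_nat (p ^ m) :: rat)"
    have P0: "P \<noteq> 0" unfolding P_def using p0 by simp
    define v where "v t = (g t - g' t) / (P * of_int C)" for t
    have vl: "plocal p (v (qexp l))" if l: "l \<in> {1..n}" for l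
    proof -
      obtain d where d: "plocal p d" "j powi (qexp l) - j' powi (qexp l) = (j - j') * d"
        using powi_diff_factor[OF pp j j'] by blast
      have r: "plocal p (of_nat p ^ (k - m) / of_int C)"
        using pl_ppow_div[OF pp C(1), of "k - m"] k unfolding M_def by simp
      have pk: "(of_nat (p ^ k) :: rat) = of_nat p ^ (k - m) * P"
        unfolding P_def using k by (simp add: power_add[symmetric])
      have e1: "g (qexp l) - g' (qexp l) = (j powi (qexp l) - j' powi (qexp l)) * f (qexp l)"
        unfolding g(3)[OF l] g'(3)[OF l] by (simp add: algebra_simps)
      have e2: "(j - j') / (P * of_int C) = ((j - j') / of_nat (p ^ k)) * (of_nat p ^ (k - m) / of_int C)"
        unfolding pk using P0 C(1) p0 by (simp add: field_simps)
      have "v (qexp l) = ((j - j') / (P * of_int C)) * (d * f (qexp l))"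
        unfolding v_def e1 d(2) by (simp add: field_simps)
      also have "\<dots> = (((j - j') / of_nat (p ^ k)) * (of_nat p ^ (k - m) / of_int C)) * (d * f (qexp l))"
        unfolding e2 ..
      finally have ev: "v (qexp l) = (((j - j') / of_nat (p ^ k)) * (of_nat p ^ (k - m) / of_int C)) * (d * f (qexp l))" .
      have fl: "plocal p (f (qexp l))" using opA_vals[OF f(1)] .
      show ?thesis unfolding ev
        by (intro pl_mult[OF pp] jj r d(1) fl)
    qed
    obtain h where h: "h \<in> opA p q" "\<forall>i\<in>{1..n}. h (qexp i) = of_int C * v (qexp i)"
      using C(2) vl by blast
    have Pl: "plocal p P" unfolding P_def using pl_of_nat[OF pp, of "p ^ m"] .
    have "act (adams j) y - act (adams j') y = act (\<lambda>t. g t - g' t) x"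
      using g(2) g'(2) act_diff[OF g(1) g'(1)] by simp
    also have "\<dots> = act (\<lambda>t. P * h t) x"
    proof (rule K)
      show "(\<lambda>t. g t - g' t) \<in> opA p q" using g(1) g'(1) by (rule opA_diff)
      show "(\<lambda>t. P * h t) \<in> opA p q" using h(1) Pl by (rule opA_smult[rotated])
      fix l assume l: "l \<in> {1..n}"
      show "g (qexp l) - g' (qexp l) = P * h (qexp l)"
        using h(2) l P0 C(1) unfolding v_def by simp
    qed
    also have "\<dots> = act (scal P) (act h x)" using act_scal_mult[OF Pl h(1)] by simp
    finally have "act (adams j) y - act (adams j') y = act (scal (of_nat (p ^ m))) (act h x)"
      unfolding P_def .
    moreover have "act h x \<in> Rcyc p act x" unfolding Rcyc_eq Ax_def using h(1) by blast
    ultimately show "\<exists>z\<in>Rcyc p act x. act (adams j) y - act (adams j') y = act (scal (of_nat (p ^ m))) z"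
      by blast
  qed
qed

end


lemma prim_facts:
  assumes p: "prime p" "odd p" and q: "primitive_mod_p2 p q"
  shows "\<not> int p dvd q" "\<bar>q\<bar> > 1"
proof -
  define g where "g = nat (q mod int (p ^ 2))"
  have prim: "residue_primroot (p ^ 2) g" using q unfolding primitive_mod_p2_def g_def .
  have p1: "p > 1" using p prime_gt_1_nat by blast
  have p3: "p \<ge> 3" using p1 p(2) by presburger
  have pos: "int (p ^ 2) > 0" using p1 by simp
  have ig: "int g = q mod int (p ^ 2)" unfolding g_def using pos by simp
  have gq: "[int g = q] (mod int (p ^ 2))" unfolding ig by simp
  have cop: "coprime (p ^ 2) g" using prim unfolding residue_primroot_def by simp
  show nq: "\<not> int p dvd q"
  proof
    assume "int p dvd q"
    moreover have "int p dvd int (p ^ 2)" by simp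
    ultimately have "int p dvd int g" using gq by (metis cong_dvd_iff cong_dvd_modulus cong_sym)
    then have "p dvd g" by simp
    moreover have "p dvd p ^ 2" by simp
    have "coprime p g" using cop by simp
    then have "is_unit p" using coprime_common_divisor[OF _ dvd_refl \<open>p dvd g\<close>] by blast
    then show False using p1 by simp
  qed
  show "\<bar>q\<bar> > 1"
  proof (rule ccontr)
    assume "\<not> \<bar>q\<bar> > 1"
    then have "q = 0 \<or> q = 1 \<or> q = -1" by auto
    moreover have "q \<noteq> 0" using nq by auto
    moreover have "q \<noteq> 1"
    proof
      assume "q = 1"
      then have "[int g = int 1] (mod int (p ^ 2))" using gq by simp
      then have "[g = 1] (mod p ^ 2)" using cong_int_iff by blast
      then have "residue_primroot (p ^ 2) 1" using prim residue_primroot_cong by blast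
      then have "p ^ 2 \<in> {1, 2}" using residue_primroot_1_iff by simp
      moreover have "p ^ 2 \<ge> 9" using p3 power_mono[of 3 p 2] by simp
      ultimately show False by auto
    qed
    moreover have "q \<noteq> -1"
    proof
      assume "q = -1"
      then have "[int g ^ 2 = (-1) ^ 2] (mod int (p ^ 2))" using gq cong_pow by blast
      then have "[int (g ^ 2) = int 1] (mod int (p ^ 2))" by simp
      then have "[g ^ 2 = 1] (mod p ^ 2)" using cong_int_iff by blast
      then have "ord (p ^ 2) g dvd 2" using ord_divides by blast
      moreover have "ord (p ^ 2) g = p * (p - 1)"
        using prim totient_prime_power_Suc[OF p(1), of 1] by (simp add: residue_primroot_def numeral_2_eq_2)
      ultimately have "p * (p - 1) \<le> 2" by (simp add: dvd_imp_le)
      moreover have "p * (p - 1) \<ge> 3 * 2" using p3 by (intro mult_mono) auto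
      ultimately show False by simp
    qed
    ultimately show False by blast
  qed
qed

theorem theorem4p2:
  fixes p :: nat and q :: int
    and act :: "(int \<Rightarrow> rat) \<Rightarrow> 'm::ab_group_add \<Rightarrow> 'm"
  assumes "prime p" and "odd p"
    and "primitive_mod_p2 p q"
    and "discrete_A_module p q act"
  shows "bousfield_module p act"
proof -
  note pf = prim_facts[OF assms(1,2,3)]
  interpret qmod p q act
    using assms pf unfolding discrete_A_module_def
    by unfold_locales auto
  show ?thesis unfolding bousfield_module_def
  proof (rule allI)
    fix x
    obtain n where n: "\<forall>a\<in>opA_from p q n. act a x = 0"
      using assms(4) unfolding discrete_A_module_def by blast
    interpret qmodx p q act x n using n by unfold_locales auto
    have A: "\<exists>G. finite G \<and> G \<subseteq> Rcyc p act x \<and> Rcyc p act x = zp_span p act G" by (rule cond_a)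
    have B: "\<forall>j. plocal_unit p j \<longrightarrow> (\<forall>y\<in>Rcyc p act x.
        \<exists>c zs. c \<noteq> 0 \<and> plocal p c \<and> act (scal c) y = sum_list (map fst zs) \<and>
          (\<forall>(z, k)\<in>set zs. z \<in> Rcyc p act x \<and>
             (\<exists>d. d \<noteq> 0 \<and> plocal p d \<and>
                act (scal d) (act (adams j) z - act (scal (j powi k)) z) = 0)))"
      using cond_b by blast
    have C: "\<forall>m::nat. m \<ge> 1 \<longrightarrow> (\<exists>k0. \<forall>k\<ge>k0. \<forall>j j'. plocal_unit p j \<longrightarrow> plocal_unit p j' \<longrightarrow>
        plocal p ((j - j') / of_nat (p ^ k)) \<longrightarrow>
        (\<forall>y\<in>Rcyc p act x. \<exists>z\<in>Rcyc p act x.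
           act (adams j) y - act (adams j') y = act (scal (of_nat (p ^ m))) z))"
      using cond_c by blast
    from A B C show "(\<exists>G. finite G \<and> G \<subseteq> Rcyc p act x \<and> Rcyc p act x = zp_span p act G) \<and>
     (\<forall>j. plocal_unit p j \<longrightarrow> (\<forall>y\<in>Rcyc p act x.
        \<exists>c zs. c \<noteq> 0 \<and> plocal p c \<and> act (scal c) y = sum_list (map fst zs) \<and>
          (\<forall>(z, k)\<in>set zs. z \<in> Rcyc p act x \<and>
             (\<exists>d. d \<noteq> 0 \<and> plocal p d \<and>
                act (scal d) (act (adams j) z - act (scal (j powi k)) z) = 0)))) \<and>
     (\<forall>m::nat. m \<ge> 1 \<longrightarrow> (\<exists>k0. \<forall>k\<ge>k0. \<forall>j j'. plocal_unit p j \<longrightarrow> plocal_unit p j' \<longrightarrow>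
        plocal p ((j - j') / of_nat (p ^ k)) \<longrightarrow>
        (\<forall>y\<in>Rcyc p act x. \<exists>z\<in>Rcyc p act x.
           act (adams j) y - act (adams j') y = act (scal (of_nat (p ^ m))) z)))"
      by (intro conjI)
  qed
qed


end
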